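(* For integers $d \ge 1$ and $n \ge 0$ define $$\widehat{\mathcal{I}}_{d,n} := n^d \int_{[0,1)^d} \Big[\prod_{j=1}^d (1-x_j)\Big]^{d-1} \exp\Big[-n \prod_{j=1}^d (1-x_j)\Big] \, dx_1\cdots dx_d.$$ Then for fixed $d$, as $n \to \infty$, $$\widehat{\mathcal{I}}_{d,n} = (\ln n)^{d-1} \sum_{j=0}^{d-1} \frac{(-1)^j \Gamma^{(j)}(d)}{j!\,(d-1-j)!} (\ln n)^{-j} + O\big((n \ln n)^{d-1} e^{-n}\big),$$ where $\Gamma^{(j)}$ denotes the $j$-th derivative of the Gamma function. *)

theory Defs
  imports "HOL-Analysis.Analysis" "HOL-Library.Landau_Symbols"
begin

definition Ihat :: "'d::finite itself \<Rightarrow> nat \<Rightarrow> real" where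
  "Ihat _ n = real n ^ CARD('d) *
     integral {x :: real^'d. \<forall>i. 0 \<le> x $ i \<and> x $ i < 1}
       (\<lambda>x. (\<Prod>i\<in>UNIV. 1 - x $ i) ^ (CARD('d) - 1) *
            exp (- real n * (\<Prod>i\<in>UNIV. 1 - x $ i)))"

end

theory Submission
  imports Defs
begin


lemma exp_ge_pow:
  fixes y :: real assumes "0 \<le> y" shows "y ^ k / fact k \<le> exp y"
proof -
  have s: "(\<lambda>n. y^n /\<^sub>R fact n) sums exp y" by (rule exp_converges)
  have "sum (\<lambda>n. y^n /\<^sub>R fact n) {k} \<le> suminf (\<lambda>n. y^n /\<^sub>R fact n)"
    by (rule sum_le_suminf) (use s assms in \<open>auto simp: sums_iff\<close>)
  thus ?thesis using s by (simp add: sums_iff divide_inverse mult.commute)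
qed

lemma integrable_gamma_kernel:
  assumes "b > 0"
  shows "integrable lborel (\<lambda>t::real. indicator {0<..} t * (t powr (b-1) * exp (-t)))"
proof (rule integrableI_nonneg)
  show "(\<lambda>t::real. indicator {0<..} t * (t powr (b-1) * exp (-t))) \<in> borel_measurable lborel"
    by measurable
  show "AE t in lborel. 0 \<le> indicator {0<..} t * (t powr (b-1) * exp (-t::real))"
    by (intro AE_I2) (auto simp: indicator_def)
  have "(\<integral>\<^sup>+ t. ennreal (indicator {0<..} t * (t powr (b-1) * exp (-t))) \<partial>lborel)
      = (\<integral>\<^sup>+ t. ennreal (indicator {0..} t * t powr (b - 1) / exp t) \<partial>lborel)"
    by (intro nn_integral_cong) (auto simp: indicator_def exp_minus field_simps)
  also have "\<dots> = ennreal (Gamma b)" using Gamma_conv_nn_integral_real[OF assms] by simp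
  finally show "(\<integral>\<^sup>+ t. ennreal (indicator {0<..} t * (t powr (b-1) * exp (-t))) \<partial>lborel) < \<infinity>"
    by simp
qed

lemma abs_ln_pow_bound:
  fixes t e :: real assumes "t > 0" "e > 0"
  shows "\<bar>ln t\<bar> ^ k \<le> fact k / e ^ k * (t powr e + t powr (-e))"
proof -
  have "(e * \<bar>ln t\<bar>) ^ k / fact k \<le> exp (e * \<bar>ln t\<bar>)"
    using assms by (intro exp_ge_pow) auto
  also have "exp (e * \<bar>ln t\<bar>) \<le> t powr e + t powr (-e)"
    using assms by (cases "ln t \<ge> 0") (auto simp: powr_def abs_if)
  finally have "e ^ k * \<bar>ln t\<bar> ^ k \<le> fact k * (t powr e + t powr (-e))"
    by (simp add: power_mult_distrib field_simps)
  thus ?thesis using assms by (simp add: field_simps)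
qed

lemma integrable_log_kernel:
  assumes "a > 0"
  shows "integrable lborel (\<lambda>t::real. indicator {0<..} t * (\<bar>ln t\<bar> ^ k * t powr (a-1) * exp (-t)))"
proof -
  define e where "e = a / 2"
  have e: "e > 0" "a - e > 0" using assms by (auto simp: e_def)
  define C where "C = fact k / e ^ k"
  have C: "C \<ge> 0" using e by (simp add: C_def)
  let ?f = "\<lambda>t::real. C * (indicator {0<..} t * (t powr ((a+e)-1) * exp (-t)) +
                             indicator {0<..} t * (t powr ((a-e)-1) * exp (-t)))"
  have i1: "integrable lborel (\<lambda>t::real. indicator {0<..} t * (t powr ((a+e)-1) * exp (-t)))"
    using e assms by (intro integrable_gamma_kernel) auto
  have i2: "integrable lborel (\<lambda>t::real. indicator {0<..} t * (t powr ((a-e)-1) * exp (-t)))"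
    using e assms by (intro integrable_gamma_kernel) auto
  have int: "integrable lborel ?f"
    by (rule Bochner_Integration.integrable_mult_right[OF Bochner_Integration.integrable_add[OF i1 i2]])
  have bnd: "\<bar>indicator {0<..} t * (\<bar>ln t\<bar> ^ k * t powr (a-1) * exp (-t))\<bar> \<le> \<bar>?f t\<bar>" for t :: real
  proof (cases "t > 0")
    case True
    have "\<bar>ln t\<bar> ^ k * (t powr (a-1) * exp (-t)) \<le> (C * (t powr e + t powr (-e))) * (t powr (a-1) * exp (-t))"
      using abs_ln_pow_bound[OF True e(1), of k] by (intro mult_right_mono) (auto simp: C_def)
    also have "\<dots> = C * ((t powr e * t powr (a-1)) * exp (-t) + (t powr (-e) * t powr (a-1)) * exp (-t))"
      by (simp only: algebra_simps)
    also have "t powr e * t powr (a-1) = t powr ((a+e)-1)"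
      by (subst powr_add[symmetric]) (simp add: algebra_simps)
    also have "t powr (-e) * t powr (a-1) = t powr ((a-e)-1)"
      by (subst powr_add[symmetric]) (simp add: algebra_simps)
    finally have "\<bar>ln t\<bar> ^ k * t powr (a-1) * exp (-t) \<le> C * (t powr ((a+e)-1) * exp (-t) + t powr ((a-e)-1) * exp (-t))"
      by (simp add: mult.assoc)
    moreover have "0 \<le> \<bar>ln t\<bar> ^ k * t powr (a-1) * exp (-t)" by simp
    ultimately show ?thesis using True C by (simp add: indicator_def)
  qed (auto simp: indicator_def)
  show ?thesis
    apply (rule Bochner_Integration.integrable_bound[OF int])
     apply measurable
    apply (rule AE_I2)
    apply (simp only: real_norm_def bnd)
    done
qed


lemma exp_diff_bound:
  fixes A B :: real
  shows "\<bar>exp A - exp B\<bar> \<le> \<bar>A - B\<bar> * max (exp A) (exp B)"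
proof -
  have *: "exp A - exp B \<le> (A - B) * exp A" if "B \<le> A" for A B :: real
  proof -
    have "exp (B - A) \<ge> 1 + (B - A)" by (rule exp_ge_add_one_self)
    hence "exp A * exp (B - A) \<ge> exp A * (1 + (B - A))" by (intro mult_left_mono) auto
    hence "exp B \<ge> exp A * (1 + (B - A))" by (simp add: exp_diff)
    thus ?thesis by (simp add: algebra_simps)
  qed
  show ?thesis
  proof (cases "B \<le> A")
    case True
    with *[OF True] show ?thesis by (auto simp: max_def)
  next
    case False
    with *[of A B] show ?thesis by (auto simp: max_def abs_if)
  qed
qed

lemma exp_lin_bound:
  fixes c p q l :: real assumes "p \<le> c" "c \<le> q"
  shows "exp (c * l) \<le> exp (p * l) + exp (q * l)"
proof (cases "l \<ge> 0")
  case True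
  hence "exp (c * l) \<le> exp (q * l)" using assms by (intro exp_mono mult_right_mono) auto
  thus ?thesis by (smt (verit) exp_gt_zero)
next
  case False
  hence "exp (c * l) \<le> exp (p * l)" using assms by (intro exp_mono mult_right_mono_neg) auto
  thus ?thesis by (smt (verit) exp_gt_zero)
qed

lemma powr_diff_quot_bound:
  fixes t x h d :: real
  assumes "t > 0" "\<bar>h\<bar> \<le> d" "h \<noteq> 0"
  shows "\<bar>(t powr (x + h - 1) - t powr (x - 1)) / h\<bar> \<le> \<bar>ln t\<bar> * (t powr (x - d - 1) + t powr (x + d - 1))"
proof -
  have "\<bar>t powr (x + h - 1) - t powr (x - 1)\<bar> = \<bar>exp ((x+h-1) * ln t) - exp ((x-1) * ln t)\<bar>"
    using assms by (simp add: powr_def)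
  also have "\<dots> \<le> \<bar>(x+h-1) * ln t - (x-1) * ln t\<bar> * max (exp ((x+h-1) * ln t)) (exp ((x-1) * ln t))"
    by (rule exp_diff_bound)
  also have "\<bar>(x+h-1) * ln t - (x-1) * ln t\<bar> = \<bar>h\<bar> * \<bar>ln t\<bar>"
    by (simp add: algebra_simps abs_mult)
  also have "max (exp ((x+h-1) * ln t)) (exp ((x-1) * ln t)) \<le> exp ((x-d-1) * ln t) + exp ((x+d-1) * ln t)"
    using assms by (intro max.boundedI exp_lin_bound) auto
  also have "exp ((x-d-1) * ln t) + exp ((x+d-1) * ln t) = t powr (x - d - 1) + t powr (x + d - 1)"
    using assms by (simp add: powr_def)
  finally have "\<bar>t powr (x + h - 1) - t powr (x - 1)\<bar> \<le> \<bar>h\<bar> * (\<bar>ln t\<bar> * (t powr (x - d - 1) + t powr (x + d - 1)))"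
    by (simp add: mult_left_mono mult.assoc)
  thus ?thesis using assms by (simp add: abs_divide field_simps)
qed


definition K :: "nat \<Rightarrow> real \<Rightarrow> real \<Rightarrow> real" where
  "K j x t = indicator {0<..} t * (ln t ^ j * t powr (x - 1) * exp (- t))"

definition G :: "nat \<Rightarrow> real \<Rightarrow> real" where
  "G j x = integral\<^sup>L lborel (K j x)"

lemma K_measurable [measurable]: "K j x \<in> borel_measurable borel"
  unfolding K_def by measurable

lemma integrable_K:
  assumes "x > 0" shows "integrable lborel (K j x)"
proof -
  have int: "integrable lborel (\<lambda>t::real. indicator {0<..} t * (\<bar>ln t\<bar> ^ j * t powr (x-1) * exp (-t)))"
    using assms by (rule integrable_log_kernel)
  show ?thesis
    apply (rule Bochner_Integration.integrable_bound[OF int])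
     apply measurable
    apply (rule AE_I2)
    apply (auto simp: K_def indicator_def abs_mult power_abs)
    done
qed

lemma G0_Gamma:
  assumes "x > 0" shows "G 0 x = Gamma x"
proof -
  have "ennreal (G 0 x) = (\<integral>\<^sup>+ t. ennreal (K 0 x t) \<partial>lborel)"
    unfolding G_def using integrable_K[OF assms]
    by (subst nn_integral_eq_integral) (auto simp: K_def indicator_def intro!: AE_I2)
  also have "\<dots> = (\<integral>\<^sup>+ t. ennreal (indicator {0..} t * t powr (x - 1) / exp t) \<partial>lborel)"
    by (intro nn_integral_cong) (auto simp: K_def indicator_def exp_minus field_simps)
  also have "\<dots> = ennreal (Gamma x)" using Gamma_conv_nn_integral_real[OF assms] by simp
  finally have "ennreal (G 0 x) = ennreal (Gamma x)" .
  moreover have "G 0 x \<ge> 0" unfolding G_def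
    by (intro integral_nonneg_AE AE_I2) (auto simp: K_def indicator_def)
  moreover have "Gamma x > 0" using assms by (rule Gamma_real_pos)
  ultimately show ?thesis by (simp add: ennreal_inj)
qed



lemma G_deriv:
  assumes "x > 0" shows "(G j has_real_derivative G (Suc j) x) (at x)"
proof -
  define d where "d = x / 2"
  have d: "d > 0" "x - d > 0" using assms by (auto simp: d_def)
  define w where "w = (\<lambda>t::real. indicator {0<..} t * (\<bar>ln t\<bar>^(Suc j) * t powr ((x-d)-1) * exp(-t))
     + indicator {0<..} t * (\<bar>ln t\<bar>^(Suc j) * t powr ((x+d)-1) * exp(-t)))"
  have w_int: "integrable lborel w" unfolding w_def using d assms
    by (intro Bochner_Integration.integrable_add integrable_log_kernel) auto
  have lim: "((\<lambda>y. (G j y - G j x) / (y - x)) \<longlongrightarrow> G (Suc j) x) (at x)"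
  proof (subst tendsto_at_iff_sequentially, intro allI impI)
    fix X :: "nat \<Rightarrow> real" assume X: "\<forall>i. X i \<in> UNIV - {x}" "X \<longlonglongrightarrow> x"
    from X(2) d(1) obtain N where N: "\<And>n. n \<ge> N \<Longrightarrow> \<bar>X n - x\<bar> < d"
      unfolding LIMSEQ_iff real_norm_def by blast
    define Y where "Y = (\<lambda>n. X (n + N))"
    have Yd: "\<bar>Y n - x\<bar> < d" for n unfolding Y_def by (intro N) auto
    have Yne: "Y n \<noteq> x" for n using X(1) unfolding Y_def by auto
    have Ypos: "Y n > 0" for n using Yd[of n] d unfolding d_def by linarith
    have Ylim: "Y \<longlonglongrightarrow> x" unfolding Y_def using X(2) by (rule LIMSEQ_ignore_initial_segment)
    have eq: "(G j (Y n) - G j x) / (Y n - x) = integral\<^sup>L lborel (\<lambda>t. (K j (Y n) t - K j x t) / (Y n - x))" for n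
      unfolding G_def using integrable_K[OF Ypos[of n], of j] integrable_K[OF assms, of j]
      by (simp add: integral_divide_zero Bochner_Integration.integral_diff)
    have "(\<lambda>n. integral\<^sup>L lborel (\<lambda>t. (K j (Y n) t - K j x t) / (Y n - x))) \<longlonglongrightarrow> integral\<^sup>L lborel (K (Suc j) x)"
    proof (rule integral_dominated_convergence[where w = w])
      show "K (Suc j) x \<in> borel_measurable lborel" by measurable
      show "(\<lambda>t. (K j (Y n) t - K j x t) / (Y n - x)) \<in> borel_measurable lborel" for n by measurable
      show "integrable lborel w" by (rule w_int)
      show "AE t in lborel. (\<lambda>n. (K j (Y n) t - K j x t) / (Y n - x)) \<longlonglongrightarrow> K (Suc j) x t"
      proof (rule AE_I2)
        fix t :: real
        show "(\<lambda>n. (K j (Y n) t - K j x t) / (Y n - x)) \<longlonglongrightarrow> K (Suc j) x t"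
        proof (cases "t > 0")
          case False thus ?thesis by (simp add: K_def)
        next
          case True
          have "((\<lambda>y. t powr (y - 1)) has_real_derivative t powr (x - 1) * ln t) (at x)"
            using True by (auto intro!: derivative_eq_intros)
          hence "((\<lambda>y. (t powr (y - 1) - t powr (x - 1)) / (y - x)) \<longlongrightarrow> t powr (x - 1) * ln t) (at x)"
            by (simp add: has_field_derivative_iff)
          hence "((\<lambda>y. (t powr (y - 1) - t powr (x - 1)) / (y - x)) \<circ> Y) \<longlonglongrightarrow> t powr (x - 1) * ln t"
            using Yne Ylim by (subst (asm) tendsto_at_iff_sequentially) auto
          hence L: "(\<lambda>n. ln t ^ j * exp (-t) * ((t powr (Y n - 1) - t powr (x - 1)) / (Y n - x)))
                   \<longlonglongrightarrow> ln t ^ j * exp (-t) * (t powr (x - 1) * ln t)"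
            by (intro tendsto_mult_left) (simp add: o_def)
          have E1: "(\<lambda>n. ln t ^ j * exp (-t) * ((t powr (Y n - 1) - t powr (x - 1)) / (Y n - x)))
                 = (\<lambda>n. (K j (Y n) t - K j x t) / (Y n - x))"
            using True by (intro ext) (simp add: K_def algebra_simps diff_divide_distrib)
          have E2: "ln t ^ j * exp (-t) * (t powr (x - 1) * ln t) = K (Suc j) x t"
            using True by (simp add: K_def algebra_simps)
          show ?thesis using L unfolding E1 E2 .
        qed
      qed
      show "AE t in lborel. norm ((K j (Y n) t - K j x t) / (Y n - x)) \<le> w t" for n
      proof (rule AE_I2)
        fix t :: real
        show "norm ((K j (Y n) t - K j x t) / (Y n - x)) \<le> w t"
        proof (cases "t > 0")
          case False thus ?thesis by (simp add: K_def w_def)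
        next
          case True
          have b: "\<bar>(t powr (x + (Y n - x) - 1) - t powr (x - 1)) / (Y n - x)\<bar>
                   \<le> \<bar>ln t\<bar> * (t powr (x - d - 1) + t powr (x + d - 1))"
            using Yd[of n] Yne[of n] True by (intro powr_diff_quot_bound) auto
          have "(K j (Y n) t - K j x t) / (Y n - x) = ln t ^ j * exp (-t) * ((t powr (x + (Y n - x) - 1) - t powr (x - 1)) / (Y n - x))"
            using True by (simp add: K_def algebra_simps diff_divide_distrib)
          hence "norm ((K j (Y n) t - K j x t) / (Y n - x)) = \<bar>ln t\<bar> ^ j * exp (-t) * \<bar>(t powr (x + (Y n - x) - 1) - t powr (x - 1)) / (Y n - x)\<bar>"
            by (simp only: real_norm_def abs_mult power_abs abs_exp_cancel)
          also have "\<dots> \<le> \<bar>ln t\<bar> ^ j * exp (-t) * (\<bar>ln t\<bar> * (t powr (x - d - 1) + t powr (x + d - 1)))"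
            by (intro mult_left_mono b) auto
          also have "\<dots> = w t" using True by (simp add: w_def algebra_simps)
          finally show ?thesis .
        qed
      qed
    qed
    moreover have E: "(\<lambda>n. (G j (Y n) - G j x) / (Y n - x)) = (\<lambda>n. integral\<^sup>L lborel (\<lambda>t. (K j (Y n) t - K j x t) / (Y n - x)))"
      by (intro ext eq)
    ultimately have "(\<lambda>n. (G j (Y n) - G j x) / (Y n - x)) \<longlonglongrightarrow> integral\<^sup>L lborel (K (Suc j) x)"
      by (simp only:)
    hence "(\<lambda>n. (G j (Y n) - G j x) / (Y n - x)) \<longlonglongrightarrow> G (Suc j) x"
      by (simp only: G_def[of "Suc j" x])
    hence "(\<lambda>n. ((\<lambda>y. (G j y - G j x) / (y - x)) \<circ> X) (n + N)) \<longlonglongrightarrow> G (Suc j) x"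
      by (simp only: Y_def o_def)
    thus "((\<lambda>y. (G j y - G j x) / (y - x)) \<circ> X) \<longlonglongrightarrow> G (Suc j) x"
      by (rule LIMSEQ_offset)
  qed
  thus ?thesis by (simp add: has_field_derivative_iff)
qed

lemma higher_deriv_Gamma_eq_G:
  "x > 0 \<Longrightarrow> (deriv ^^ j) Gamma x = G j x"
proof (induction j arbitrary: x)
  case 0 thus ?case unfolding funpow_0 by (rule G0_Gamma[symmetric])
next
  case (Suc j)
  have "(G j has_real_derivative G (Suc j) x) (at x)" using Suc.prems by (rule G_deriv)
  hence "((deriv ^^ j) Gamma has_real_derivative G (Suc j) x) (at x)"
  proof (rule has_field_derivative_transform_within_open[where S = "{0<..}"])
    show "x \<in> {0<..}" using Suc.prems by (simp only: greaterThan_iff)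
    show "open ({0<..} :: real set)" by (rule open_greaterThan)
    fix y :: real assume "y \<in> {0<..}"
    hence "y > 0" by (simp only: greaterThan_iff)
    thus "G j y = (deriv ^^ j) Gamma y" by (rule sym[OF Suc.IH])
  qed
  hence "deriv ((deriv ^^ j) Gamma) x = G (Suc j) x" by (rule DERIV_imp_deriv)
  thus ?case by (simp only: funpow.simps o_def)
qed



definition hfun :: "nat \<Rightarrow> real \<Rightarrow> real" where
  "hfun k u = (- ln u) ^ (k - 1) / fact (k - 1)"

lemma hfun_measurable [measurable]: "hfun k \<in> borel_measurable borel"
  unfolding hfun_def by measurable

lemma refl_sub:
  fixes g :: "real \<Rightarrow> ennreal"
  assumes [measurable]: "g \<in> borel_measurable borel"
  shows "(\<integral>\<^sup>+ y. indicator {0..<1} y * g (1 - y) \<partial>lborel) = (\<integral>\<^sup>+ v. indicator {0<..1} v * g v \<partial>lborel)"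
proof -
  have "(\<integral>\<^sup>+ v. indicator {0<..1} v * g v \<partial>lborel) =
        ennreal \<bar>-1\<bar> * (\<integral>\<^sup>+ y. indicator {0<..1} (1 + (-1) * y) * g (1 + (-1) * y) \<partial>lborel)"
    by (rule nn_integral_real_affine) auto
  also have "\<dots> = (\<integral>\<^sup>+ y. indicator {0<..1} (1 - y) * g (1 - y) \<partial>lborel)"
    by simp
  also have "\<dots> = (\<integral>\<^sup>+ y. indicator {0..<1} y * g (1 - y) \<partial>lborel)"
    by (intro nn_integral_cong) (auto simp: indicator_def)
  finally show ?thesis ..
qed

lemma scale_sub:
  fixes F :: "real \<Rightarrow> ennreal"
  assumes [measurable]: "F \<in> borel_measurable borel" and y: "y > 0"
  shows "(\<integral>\<^sup>+ u. F (y * u) \<partial>lborel) = ennreal (1 / y) * (\<integral>\<^sup>+ v. F v \<partial>lborel)"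
proof -
  have "(\<integral>\<^sup>+ v. F v \<partial>lborel) = ennreal \<bar>y\<bar> * (\<integral>\<^sup>+ u. F (0 + y * u) \<partial>lborel)"
    using y by (intro nn_integral_real_affine) auto
  hence "ennreal (1 / y) * (\<integral>\<^sup>+ v. F v \<partial>lborel) = (ennreal (1 / y) * ennreal y) * (\<integral>\<^sup>+ u. F (y * u) \<partial>lborel)"
    using y by (simp add: mult.assoc)
  also have "ennreal (1 / y) * ennreal y = 1"
    using y by (simp add: ennreal_mult[symmetric])
  finally show ?thesis by simp
qed

lemma inner_FTC:
  assumes v: "0 < v" "v \<le> 1" and k: "k \<ge> 1"
  shows "(\<integral>\<^sup>+ y. ennreal (hfun k (v / y) / y) * indicator {v..1} y \<partial>lborel) = ennreal (hfun (Suc k) v)"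
proof -
  define F where "F = (\<lambda>y. (ln y - ln v) ^ k / fact k)"
  have eqh: "hfun k (v / y) / y = (ln y - ln v) ^ (k - 1) / fact (k - 1) / y" if "y > 0" for y
    using that v by (simp add: hfun_def ln_div)
  have fk: "fact k = real k * fact (k - 1)" using k by (cases k) auto
  have "(\<integral>\<^sup>+ y. ennreal (hfun k (v / y) / y) * indicator {v..1} y \<partial>lborel)
      = (\<integral>\<^sup>+y\<in>{v..1}. ennreal ((ln y - ln v) ^ (k - 1) / fact (k - 1) / y) \<partial>lborel)"
    using v by (intro nn_integral_cong) (auto simp: indicator_def eqh)
  also have "\<dots> = ennreal (F 1 - F v)"
  proof (rule nn_integral_FTC_Icc)
    show "(\<lambda>y. (ln y - ln v) ^ (k - 1) / fact (k - 1) / y) \<in> borel_measurable borel" by measurable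
    fix y assume y: "y \<in> {v..1}"
    hence ypos: "y > 0" using v by auto
    show "0 \<le> (ln y - ln v) ^ (k - 1) / fact (k - 1) / y"
      using y ypos v by (auto intro!: divide_nonneg_pos zero_le_power)
    have "(F has_real_derivative (real k * (ln y - ln v) ^ (k - 1) * (1 / y)) / fact k) (at y)"
      unfolding F_def using ypos by (auto intro!: derivative_eq_intros)
    also have "(real k * (ln y - ln v) ^ (k - 1) * (1 / y)) / fact k = (ln y - ln v) ^ (k - 1) / fact (k - 1) / y"
      using k by (simp add: fk field_simps)
    finally show "(F has_real_derivative (ln y - ln v) ^ (k - 1) / fact (k - 1) / y) (at y)" .
  qed (use v in auto)
  also have "F 1 - F v = hfun (Suc k) v"
    using k by (simp add: F_def hfun_def)
  finally show ?thesis .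
qed


lemma hfun_nonneg: "0 < u \<Longrightarrow> u \<le> 1 \<Longrightarrow> hfun k u \<ge> 0"
  unfolding hfun_def by (auto intro!: divide_nonneg_pos zero_le_power simp: ln_le_zero_iff)

lemma step2D:
  fixes g :: "real \<Rightarrow> ennreal"
  assumes [measurable]: "g \<in> borel_measurable borel" and k: "k \<ge> 1"
  shows "(\<integral>\<^sup>+ y. indicator {0<..1} y * (\<integral>\<^sup>+ u. indicator {0<..1} u * g (y * u) * ennreal (hfun k u) \<partial>lborel) \<partial>lborel)
       = (\<integral>\<^sup>+ v. indicator {0<..1} v * g v * ennreal (hfun (Suc k) v) \<partial>lborel)"
proof -
  define H where "H = (\<lambda>v y::real. (if 0 < v \<and> v \<le> y \<and> y \<le> 1 then 1 else 0) * g v * ennreal (hfun k (v / y) / y))"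
  have H_meas: "(\<lambda>(v, y). H v y) \<in> borel_measurable (lborel \<Otimes>\<^sub>M lborel)" unfolding H_def by measurable
  have 1: "indicator {0<..1} y * (\<integral>\<^sup>+ u. indicator {0<..1} u * g (y * u) * ennreal (hfun k u) \<partial>lborel) = (\<integral>\<^sup>+ v. H v y \<partial>lborel)" for y
  proof (cases "0 < y \<and> y \<le> 1")
    case False
    then have "H v y = 0" for v unfolding H_def by auto
    with False show ?thesis by (simp add: indicator_def)
  next
    case True
    let ?F = "\<lambda>v. indicator {0<..y} v * g v * ennreal (hfun k (v / y))"
    have "(\<integral>\<^sup>+ u. indicator {0<..1} u * g (y*u) * ennreal (hfun k u) \<partial>lborel) = (\<integral>\<^sup>+ u. ?F (y * u) \<partial>lborel)"
    proof (intro nn_integral_cong)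
      fix u :: real
      have "indicator {0<..y} (y * u) = (indicator {0<..1} u :: ennreal)"
        using True by (auto simp: indicator_def zero_less_mult_iff mult_le_cancel_left1)
      thus "indicator {0<..1} u * g (y*u) * ennreal (hfun k u) = ?F (y * u)"
        using True by simp
    qed
    also have "\<dots> = ennreal (1/y) * (\<integral>\<^sup>+ v. ?F v \<partial>lborel)"
      using True by (intro scale_sub) auto
    also have "\<dots> = (\<integral>\<^sup>+ v. ennreal (1/y) * ?F v \<partial>lborel)"
      by (rule nn_integral_cmult[symmetric]) measurable
    also have "\<dots> = (\<integral>\<^sup>+ v. H v y \<partial>lborel)"
    proof (intro nn_integral_cong)
      fix v :: real
      show "ennreal (1/y) * ?F v = H v y"
      proof (cases "0 < v \<and> v \<le> y")
        case False thus ?thesis by (auto simp: H_def indicator_def)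
      next
        case True2: True
        have h0: "hfun k (v / y) \<ge> 0" using True True2 by (intro hfun_nonneg) auto
        have "ennreal (1/y) * ennreal (hfun k (v / y)) = ennreal (hfun k (v / y) / y)"
          using True h0 by (simp add: ennreal_mult[symmetric])
        thus ?thesis using True True2 by (auto simp: H_def indicator_def mult.commute mult.left_commute)
      qed
    qed
    finally show ?thesis using True by (simp add: indicator_def)
  qed
  have 2: "indicator {0<..1} v * g v * ennreal (hfun (Suc k) v) = (\<integral>\<^sup>+ y. H v y \<partial>lborel)" for v
  proof (cases "0 < v \<and> v \<le> 1")
    case False
    then have "H v y = 0" for y unfolding H_def by auto
    with False show ?thesis by (simp add: indicator_def)
  next
    case True
    have "(\<integral>\<^sup>+ y. H v y \<partial>lborel) = (\<integral>\<^sup>+ y. g v * (ennreal (hfun k (v / y) / y) * indicator {v..1} y) \<partial>lborel)"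
      using True by (intro nn_integral_cong) (auto simp: H_def indicator_def)
    also have "\<dots> = g v * (\<integral>\<^sup>+ y. ennreal (hfun k (v / y) / y) * indicator {v..1} y \<partial>lborel)"
      by (rule nn_integral_cmult) measurable
    also have "\<dots> = g v * ennreal (hfun (Suc k) v)"
      using True k by (simp add: inner_FTC)
    finally show ?thesis using True by (simp add: indicator_def)
  qed
  have "(\<integral>\<^sup>+ y. indicator {0<..1} y * (\<integral>\<^sup>+ u. indicator {0<..1} u * g (y * u) * ennreal (hfun k u) \<partial>lborel) \<partial>lborel)
      = (\<integral>\<^sup>+ y. \<integral>\<^sup>+ v. H v y \<partial>lborel \<partial>lborel)"
    by (intro nn_integral_cong 1)
  also have "\<dots> = (\<integral>\<^sup>+ v. \<integral>\<^sup>+ y. H v y \<partial>lborel \<partial>lborel)"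
    using H_meas by (rule lborel_pair.Fubini')
  also have "\<dots> = (\<integral>\<^sup>+ v. indicator {0<..1} v * g v * ennreal (hfun (Suc k) v) \<partial>lborel)"
    by (intro nn_integral_cong 2[symmetric])
  finally show ?thesis .
qed


lemma density_prod:
  fixes g :: "real \<Rightarrow> ennreal" and A :: "'a set"
  assumes "finite A" "A \<noteq> {}" "g \<in> borel_measurable borel"
  shows "(\<integral>\<^sup>+ x. indicator (Pi\<^sub>E A (\<lambda>_. {0..<1})) x * g (\<Prod>a\<in>A. 1 - x a) \<partial>Pi\<^sub>M A (\<lambda>_. lborel))
       = (\<integral>\<^sup>+ u. indicator {0<..1} u * g u * ennreal (hfun (card A) u) \<partial>lborel)"
  using assms
proof (induction A arbitrary: g rule: finite_ne_induct)
  case (singleton b)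
  note [measurable] = singleton.prems
  interpret product_sigma_finite "\<lambda>_. lborel" by standard
  have "(\<integral>\<^sup>+ x. indicator (Pi\<^sub>E {b} (\<lambda>_. {0..<1})) x * g (\<Prod>a\<in>{b}. 1 - x a) \<partial>Pi\<^sub>M {b} (\<lambda>_. lborel))
      = (\<integral>\<^sup>+ x. (\<lambda>z. indicator {0..<1} z * g (1 - z)) (x b) \<partial>Pi\<^sub>M {b} (\<lambda>_. lborel))"
    by (intro nn_integral_cong) (auto simp: indicator_def space_PiM PiE_def extensional_def)
  also have "\<dots> = (\<integral>\<^sup>+ z. indicator {0..<1} z * g (1 - z) \<partial>lborel)"
    by (rule product_nn_integral_singleton) measurable
  also have "\<dots> = (\<integral>\<^sup>+ v. indicator {0<..1} v * g v \<partial>lborel)"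
    by (rule refl_sub) measurable
  also have "\<dots> = (\<integral>\<^sup>+ u. indicator {0<..1} u * g u * ennreal (hfun (card {b}) u) \<partial>lborel)"
    by (simp add: hfun_def)
  finally show ?case .
next
  case (insert b A)
  note [measurable] = insert.prems
  interpret product_sigma_finite "\<lambda>_. lborel" by standard
  define \<Phi> where "\<Phi> = (\<lambda>z. \<integral>\<^sup>+ u. indicator {0<..1} u * g (z * u) * ennreal (hfun (card A) u) \<partial>lborel)"
  have \<Phi>_meas [measurable]: "\<Phi> \<in> borel_measurable borel"
    unfolding \<Phi>_def by measurable
  have "(\<integral>\<^sup>+ x. indicator (Pi\<^sub>E (insert b A) (\<lambda>_. {0..<1})) x * g (\<Prod>a\<in>insert b A. 1 - x a) \<partial>Pi\<^sub>M (insert b A) (\<lambda>_. lborel))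
     = (\<integral>\<^sup>+ y. \<integral>\<^sup>+ x. indicator (Pi\<^sub>E (insert b A) (\<lambda>_. {0..<1})) (x(b := (y::real))) * g (\<Prod>a\<in>insert b A. 1 - (x(b := y)) a) \<partial>Pi\<^sub>M A (\<lambda>_. lborel) \<partial>lborel)"
    using insert.hyps by (intro product_nn_integral_insert_rev) auto
  also have "\<dots> = (\<integral>\<^sup>+ y. \<integral>\<^sup>+ x. indicator {0..<1} y * (indicator (Pi\<^sub>E A (\<lambda>_. {0..<1})) x * g ((1 - y) * (\<Prod>a\<in>A. 1 - x a))) \<partial>Pi\<^sub>M A (\<lambda>_. lborel) \<partial>lborel)"
  proof (intro nn_integral_cong)
    fix y :: real and x :: "'a \<Rightarrow> real"
    assume "y \<in> space lborel" and x: "x \<in> space (Pi\<^sub>M A (\<lambda>_. lborel))"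
    have p: "(\<Prod>a\<in>insert b A. 1 - (x(b := y)) a) = (1 - y) * (\<Prod>a\<in>A. 1 - x a)"
    proof -
      have "(\<Prod>a\<in>A. 1 - (x(b := y)) a) = (\<Prod>a\<in>A. 1 - x a)"
        using insert.hyps by (intro prod.cong) auto
      thus ?thesis using insert.hyps by simp
    qed
    have i: "x(b := y) \<in> Pi\<^sub>E (insert b A) (\<lambda>_. {0..<1}) \<longleftrightarrow> y \<in> {0..<1} \<and> x \<in> Pi\<^sub>E A (\<lambda>_. {0..<1})"
      using x insert.hyps by (auto simp: space_PiM PiE_def extensional_def Pi_def split: if_splits)
    show "indicator (Pi\<^sub>E (insert b A) (\<lambda>_. {0..<1})) (x(b := y)) * g (\<Prod>a\<in>insert b A. 1 - (x(b := y)) a)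
        = indicator {0..<1} y * (indicator (Pi\<^sub>E A (\<lambda>_. {0..<1})) x * g ((1 - y) * (\<Prod>a\<in>A. 1 - x a)))"
      unfolding p using i by (auto simp: indicator_def)
  qed
  also have "\<dots> = (\<integral>\<^sup>+ y. indicator {0..<1} y * \<Phi> (1 - y) \<partial>lborel)"
  proof (intro nn_integral_cong)
    fix y :: real
    have "(\<integral>\<^sup>+ x. indicator {0..<1} y * (indicator (Pi\<^sub>E A (\<lambda>_. {0..<1})) x * g ((1 - y) * (\<Prod>a\<in>A. 1 - x a))) \<partial>Pi\<^sub>M A (\<lambda>_. lborel))
        = indicator {0..<1} y * (\<integral>\<^sup>+ x. indicator (Pi\<^sub>E A (\<lambda>_. {0..<1})) x * (\<lambda>u. g ((1 - y) * u)) (\<Prod>a\<in>A. 1 - x a) \<partial>Pi\<^sub>M A (\<lambda>_. lborel))"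
      using insert.hyps by (intro nn_integral_cmult) measurable
    also have "\<dots> = indicator {0..<1} y * \<Phi> (1 - y)"
      unfolding \<Phi>_def by (subst insert.IH) auto
    finally show "(\<integral>\<^sup>+ x. indicator {0..<1} y * (indicator (Pi\<^sub>E A (\<lambda>_. {0..<1})) x * g ((1 - y) * (\<Prod>a\<in>A. 1 - x a))) \<partial>Pi\<^sub>M A (\<lambda>_. lborel))
        = indicator {0..<1} y * \<Phi> (1 - y)" .
  qed
  also have "\<dots> = (\<integral>\<^sup>+ y. indicator {0<..1} y * \<Phi> y \<partial>lborel)"
    by (rule refl_sub) measurable
  also have "\<dots> = (\<integral>\<^sup>+ v. indicator {0<..1} v * g v * ennreal (hfun (Suc (card A)) v) \<partial>lborel)"
    unfolding \<Phi>_def using insert.hyps by (intro step2D) (auto simp: Suc_le_eq card_gt_0_iff)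
  also have "Suc (card A) = card (insert b A)" using insert.hyps by simp
  finally show ?case .
qed



lemma Basis_vec_range: "(Basis :: (real^'d) set) = range (\<lambda>i. axis i 1)"
  by (auto simp: Basis_vec_def Basis_real_def)

lemma inj_axis1: "inj (\<lambda>i::'d::finite. axis i (1::real))"
  by (auto simp: inj_def axis_eq_axis)

lemma vec_comp: "(\<Sum>b\<in>Basis. y b *\<^sub>R b :: real^'d) $ i = y (axis i 1)"
  by (simp add: cart_eq_inner_axis inner_sum_left_Basis axis_in_Basis_iff)

lemma card_Basis_vec: "card (Basis :: (real^'d) set) = CARD('d)"
  using DIM_cart[where 'a=real and 'b='d] by simp

lemma cube_nn:
  fixes n :: real
  defines "S \<equiv> {x :: real^'d. \<forall>i. 0 \<le> x $ i \<and> x $ i < 1}"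
  shows "(\<integral>\<^sup>+ x. ennreal (indicator S x * ((\<Prod>i\<in>UNIV. 1 - x $ i) ^ (CARD('d) - 1) *
            exp (- n * (\<Prod>i\<in>UNIV. 1 - x $ i)))) \<partial>lborel)
       = (\<integral>\<^sup>+ u. indicator {0<..1} u * ennreal (u ^ (CARD('d) - 1) * exp (- n * u)) * ennreal (hfun CARD('d) u) \<partial>lborel)"
proof -
  define g where "g = (\<lambda>u::real. ennreal (u ^ (CARD('d) - 1) * exp (- n * u)))"
  have g_meas [measurable]: "g \<in> borel_measurable borel" unfolding g_def by measurable
  define F where "F = (\<lambda>x::real^'d. ennreal (indicator S x * ((\<Prod>i\<in>UNIV. 1 - x $ i) ^ (CARD('d) - 1) *
            exp (- n * (\<Prod>i\<in>UNIV. 1 - x $ i)))))"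
  have S_meas: "S \<in> sets borel"
  proof -
    have "S = (\<Inter>i. {x::real^'d. 0 \<le> x $ i} \<inter> {x. x $ i < 1})" by (auto simp: S_def)
    also have "\<dots> \<in> sets borel" by measurable
    finally show ?thesis .
  qed
  have F_meas [measurable]: "F \<in> borel_measurable borel"
    unfolding F_def using S_meas by measurable
  have "(\<integral>\<^sup>+ x. F x \<partial>lborel) = (\<integral>\<^sup>+ x. F x \<partial>distr (Pi\<^sub>M Basis (\<lambda>b. lborel)) borel (\<lambda>f. \<Sum>b\<in>Basis. f b *\<^sub>R b))"
    by (subst lborel_eq) simp
  also have "\<dots> = (\<integral>\<^sup>+ y. F (\<Sum>b\<in>Basis. y b *\<^sub>R b) \<partial>Pi\<^sub>M Basis (\<lambda>b. lborel))"
    by (rule nn_integral_distr) auto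
  also have "\<dots> = (\<integral>\<^sup>+ y. indicator (Pi\<^sub>E Basis (\<lambda>_. {0..<1})) y * g (\<Prod>b\<in>Basis. 1 - y b) \<partial>Pi\<^sub>M (Basis :: (real^'d) set) (\<lambda>b. lborel))"
  proof (intro nn_integral_cong)
    fix y :: "real^'d \<Rightarrow> real" assume y: "y \<in> space (Pi\<^sub>M Basis (\<lambda>b. lborel))"
    define v where "v = (\<Sum>b\<in>Basis. y b *\<^sub>R b :: real^'d)"
    have vi: "v $ i = y (axis i 1)" for i unfolding v_def by (rule vec_comp)
    have p: "(\<Prod>i\<in>UNIV. 1 - v $ i) = (\<Prod>b\<in>Basis. 1 - y b)"
      unfolding Basis_vec_range vi by (subst prod.reindex[OF inj_axis1]) (simp add: o_def)
    have mem: "v \<in> S \<longleftrightarrow> y \<in> Pi\<^sub>E Basis (\<lambda>_. {0..<1})"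
      using y unfolding S_def by (auto simp: vi space_PiM PiE_def Pi_def Basis_vec_range)
    show "F (\<Sum>b\<in>Basis. y b *\<^sub>R b) = indicator (Pi\<^sub>E Basis (\<lambda>_. {0..<1})) y * g (\<Prod>b\<in>Basis. 1 - y b)"
      unfolding v_def[symmetric] F_def g_def p using mem by (auto simp: indicator_def)
  qed
  also have "\<dots> = (\<integral>\<^sup>+ u. indicator {0<..1} u * g u * ennreal (hfun (card (Basis :: (real^'d) set)) u) \<partial>lborel)"
    by (rule density_prod) auto
  finally show ?thesis unfolding F_def g_def card_Basis_vec .
qed



definition Phi :: "nat \<Rightarrow> real \<Rightarrow> real \<Rightarrow> real" where
  "Phi d N t = t ^ (d - 1) * exp (- t) * (ln N - ln t) ^ (d - 1) / fact (d - 1)"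

lemma Phi_measurable [measurable]: "Phi d N \<in> borel_measurable borel"
  unfolding Phi_def by measurable

lemma Phi_nonneg: "0 < t \<Longrightarrow> t \<le> N \<Longrightarrow> Phi d N t \<ge> 0"
  unfolding Phi_def by (auto intro!: divide_nonneg_pos mult_nonneg_nonneg zero_le_power)

lemma Ihat_eq:
  fixes dt :: "'d::finite itself" and n :: nat
  assumes n: "n > 0"
  shows "integrable lborel (\<lambda>t. indicator {0<..real n} t * Phi CARD('d) (real n) t)"
    and "Ihat dt n = integral\<^sup>L lborel (\<lambda>t. indicator {0<..real n} t * Phi CARD('d) (real n) t)"
proof -
  define d where "d = CARD('d)"
  have d1: "d \<ge> 1" unfolding d_def by (simp add: Suc_le_eq)
  define N where "N = real n"
  have N: "N > 0" using n by (simp add: N_def)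
  define S where "S = {x :: real^'d. \<forall>i. 0 \<le> x $ i \<and> x $ i < 1}"
  define f where "f = (\<lambda>x::real^'d. (\<Prod>i\<in>UNIV. 1 - x $ i) ^ (CARD('d) - 1) *
            exp (- N * (\<Prod>i\<in>UNIV. 1 - x $ i)))"
  define J where "J = (\<integral>\<^sup>+ u. indicator {0<..1} u * ennreal (u ^ (CARD('d) - 1) * exp (- N * u)) * ennreal (hfun CARD('d) u) \<partial>lborel)"
  have S_meas: "S \<in> sets borel"
  proof -
    have "S = (\<Inter>i. {x::real^'d. 0 \<le> x $ i} \<inter> {x. x $ i < 1})" by (auto simp: S_def)
    also have "\<dots> \<in> sets borel" by measurable
    finally show ?thesis .
  qed
  have f_meas [measurable]: "f \<in> borel_measurable borel" unfolding f_def by measurable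
  have J_eq: "(\<integral>\<^sup>+ x. ennreal (indicator S x * f x) \<partial>lborel) = J"
    unfolding J_def S_def f_def by (rule cube_nn)
  have f_bounds: "0 \<le> f x \<and> f x \<le> 1" if "x \<in> S" for x
  proof -
    have p: "0 \<le> (\<Prod>i\<in>UNIV. 1 - x $ i)" "(\<Prod>i\<in>UNIV. 1 - x $ i) \<le> 1"
      using that unfolding S_def by (auto intro!: prod_nonneg prod_le_1 simp: less_imp_le)
    have "(\<Prod>i\<in>UNIV. 1 - x $ i) ^ (CARD('d) - 1) \<le> 1" using p by (intro power_le_one)
    moreover have "exp (- N * (\<Prod>i\<in>UNIV. 1 - x $ i)) \<le> 1" using p N by simp
    ultimately show ?thesis unfolding f_def using p
      by (auto intro!: mult_le_one mult_nonneg_nonneg)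
  qed
  have "J \<le> (\<integral>\<^sup>+ x. indicator (cbox (0::real^'d) 1) x \<partial>lborel)"
    unfolding J_eq[symmetric]
  proof (intro nn_integral_mono)
    fix x :: "real^'d"
    show "ennreal (indicator S x * f x) \<le> indicator (cbox 0 1) x"
    proof (cases "x \<in> S")
      case True
      hence "x \<in> cbox 0 1" by (auto simp: S_def mem_box_cart less_imp_le)
      thus ?thesis using True f_bounds[OF True] by (simp add: indicator_def)
    qed (simp add: indicator_def)
  qed
  also have "\<dots> = emeasure lborel (cbox (0::real^'d) 1)" by simp
  also have "\<dots> < \<infinity>" by (rule emeasure_lborel_cbox_finite)
  finally have J_fin: "J < \<infinity>" .
  define r where "r = enn2real J"
  have J_r: "J = ennreal r" unfolding r_def using J_fin by (simp add: ennreal_enn2real_if)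
  have r0: "r \<ge> 0" unfolding r_def by simp
  have "((\<lambda>x. indicator S x * f x) has_integral r) UNIV"
  proof (rule nn_integral_has_integral)
    show "(\<lambda>x. indicator S x * f x) \<in> borel_measurable borel" using S_meas by measurable
    show "0 \<le> indicator S x * f x" for x using f_bounds[of x] by (auto simp: indicator_def)
    show "(\<integral>\<^sup>+ x. ennreal (indicator S x * f x) \<partial>lborel) = ennreal r" using J_eq J_r by simp
  qed (rule r0)
  moreover have "(\<lambda>x. indicator S x * f x) = (\<lambda>x. if x \<in> S then f x else 0)"
    by (auto simp: indicator_def fun_eq_iff)
  ultimately have "((\<lambda>x. if x \<in> S then f x else 0) has_integral r) UNIV"
    by simp
  hence "(f has_integral r) S" by (simp only: has_integral_restrict_UNIV)
  hence intS: "integral S f = r" by (rule integral_unique)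
  have Ihat_r: "Ihat dt n = N ^ d * r"
    unfolding Ihat_def d_def N_def using intS by (simp add: S_def f_def N_def)
  have Phi_eq: "ennreal (indicator {0<..N} (N * u) * Phi d N (N * u))
      = ennreal (N ^ (d - 1)) * (indicator {0<..1} u * ennreal (u ^ (CARD('d) - 1) * exp (- N * u)) * ennreal (hfun CARD('d) u))" for u
  proof (cases "0 < u \<and> u \<le> 1")
    case False
    hence "\<not> (0 < N * u \<and> N * u \<le> N)" using N by (auto simp: zero_less_mult_iff)
    thus ?thesis using False by (auto simp: indicator_def)
  next
    case True
    have h0: "hfun d u \<ge> 0" using True by (intro hfun_nonneg) auto
    have "Phi d N (N * u) = N ^ (d - 1) * (u ^ (d - 1) * exp (- N * u) * hfun d u)"
    proof -
      have e: "ln N - ln (N * u) = - ln u" using N True by (simp add: ln_mult)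
      show ?thesis unfolding Phi_def hfun_def e by (simp add: power_mult_distrib field_simps)
    qed
    moreover have "N * u \<in> {0<..N}" using True N by (auto simp: mult_le_cancel_left1)
    ultimately show ?thesis using True h0 N
      by (simp add: indicator_def d_def ennreal_mult[symmetric] mult.assoc)
  qed
  have nnPhi: "(\<integral>\<^sup>+ t. ennreal (indicator {0<..N} t * Phi d N t) \<partial>lborel) = ennreal (N ^ d) * J"
  proof -
    have "(\<integral>\<^sup>+ t. ennreal (indicator {0<..N} t * Phi d N t) \<partial>lborel)
        = ennreal \<bar>N\<bar> * (\<integral>\<^sup>+ u. ennreal (indicator {0<..N} (0 + N * u) * Phi d N (0 + N * u)) \<partial>lborel)"
    proof (rule nn_integral_real_affine)
      show "(\<lambda>t. ennreal (indicator {0<..N} t * Phi d N t)) \<in> borel_measurable borel" by measurable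
    qed (use N in simp)
    also have "\<dots> = ennreal N * (ennreal (N ^ (d - 1)) * J)"
      unfolding J_def using N
      by (simp add: Phi_eq nn_integral_cmult)
    also have "ennreal N * (ennreal (N ^ (d - 1)) * J) = ennreal (N * N ^ (d - 1)) * J"
      using N by (simp add: ennreal_mult mult.assoc)
    also have "N * N ^ (d - 1) = N ^ d" using d1 by (cases d) auto
    finally show ?thesis .
  qed
  show int: "integrable lborel (\<lambda>t. indicator {0<..real n} t * Phi CARD('d) (real n) t)"
  proof (rule integrableI_nonneg)
    show "(\<lambda>t. indicator {0<..real n} t * Phi CARD('d) (real n) t) \<in> borel_measurable lborel" by measurable
    show "AE t in lborel. 0 \<le> indicator {0<..real n} t * Phi CARD('d) (real n) t"
      by (intro AE_I2) (auto simp: indicator_def Phi_nonneg)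
    show "(\<integral>\<^sup>+ t. ennreal (indicator {0<..real n} t * Phi CARD('d) (real n) t) \<partial>lborel) < \<infinity>"
      using nnPhi J_fin unfolding d_def N_def by (simp add: ennreal_mult_less_top)
  qed
  have "ennreal (integral\<^sup>L lborel (\<lambda>t. indicator {0<..real n} t * Phi CARD('d) (real n) t))
      = (\<integral>\<^sup>+ t. ennreal (indicator {0<..real n} t * Phi CARD('d) (real n) t) \<partial>lborel)"
    using int by (intro nn_integral_eq_integral[symmetric]) (auto intro!: AE_I2 simp: indicator_def Phi_nonneg)
  also have "\<dots> = ennreal (N ^ d) * ennreal r" using nnPhi J_r unfolding d_def N_def by simp
  also have "\<dots> = ennreal (Ihat dt n)" using Ihat_r N r0 by (simp add: ennreal_mult[symmetric])
  finally have "ennreal (integral\<^sup>L lborel (\<lambda>t. indicator {0<..real n} t * Phi CARD('d) (real n) t)) = ennreal (Ihat dt n)" .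
  moreover have "Ihat dt n \<ge> 0" using Ihat_r N r0 by simp
  moreover have "integral\<^sup>L lborel (\<lambda>t. indicator {0<..real n} t * Phi CARD('d) (real n) t) \<ge> 0"
    by (intro integral_nonneg_AE AE_I2) (auto simp: indicator_def Phi_nonneg)
  ultimately show "Ihat dt n = integral\<^sup>L lborel (\<lambda>t. indicator {0<..real n} t * Phi CARD('d) (real n) t)"
    by (simp add: ennreal_inj)
qed



lemma integrable_poly_exp:
  "integrable lborel (\<lambda>s::real. indicator {0<..} s * ((1 + s) ^ m * exp (- s)))"
proof -
  have eq: "(\<lambda>s::real. indicator {0<..} s * ((1 + s) ^ m * exp (- s)))
      = (\<lambda>s. \<Sum>k\<le>m. real (m choose k) * (indicator {0<..} s * (s powr (real (k + 1) - 1) * exp (- s))))"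
  proof
    fix s :: real
    show "indicator {0<..} s * ((1 + s) ^ m * exp (- s)) = (\<Sum>k\<le>m. real (m choose k) * (indicator {0<..} s * (s powr (real (k + 1) - 1) * exp (- s))))"
    proof (cases "s > 0")
      case True
      have "(1 + s) ^ m = (s + 1) ^ m" by (simp add: add.commute)
      also have "\<dots> = (\<Sum>k\<le>m. real (m choose k) * s ^ k * 1 ^ (m - k))" by (rule binomial_ring)
      finally have "(1 + s) ^ m * exp (- s) = (\<Sum>k\<le>m. real (m choose k) * (s ^ k * exp (- s)))"
        by (simp add: sum_distrib_right mult.assoc)
      thus ?thesis using True by (simp add: powr_realpow indicator_def)
    qed (simp add: indicator_def)
  qed
  show ?thesis unfolding eq
    by (intro Bochner_Integration.integrable_sum Bochner_Integration.integrable_mult_right integrable_gamma_kernel) auto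
qed


definition coef :: "nat \<Rightarrow> real \<Rightarrow> nat \<Rightarrow> real" where
  "coef d L j = (-1) ^ j * L ^ (d - 1 - j) / (fact j * fact (d - 1 - j))"

lemma Phi_expand:
  assumes d: "d \<ge> 1"
  shows "indicator {0<..} t * Phi d N t = (\<Sum>j\<le>d-1. coef d (ln N) j * K j (real d) t)"
proof (cases "t > 0")
  case False thus ?thesis by (simp add: K_def indicator_def)
next
  case True
  have pw: "t powr (real d - 1) = t ^ (d - 1)"
  proof -
    have "real d - 1 = real (d - 1)" using d by (simp add: of_nat_diff)
    thus ?thesis using True by (simp only: powr_realpow)
  qed
  have "(ln N - ln t) ^ (d - 1) = (- ln t + ln N) ^ (d - 1)" by simp
  also have "\<dots> = (\<Sum>j\<le>d-1. real (d - 1 choose j) * (- ln t) ^ j * ln N ^ (d - 1 - j))"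
    by (rule binomial_ring)
  finally have b: "(ln N - ln t) ^ (d - 1) = (\<Sum>j\<le>d-1. real (d - 1 choose j) * (- ln t) ^ j * ln N ^ (d - 1 - j))" .
  have "Phi d N t = (ln N - ln t) ^ (d - 1) * (t ^ (d - 1) * exp (- t) / fact (d - 1))"
    unfolding Phi_def by simp
  also have "\<dots> = (\<Sum>j\<le>d-1. (real (d - 1 choose j) * (- ln t) ^ j * ln N ^ (d - 1 - j)) * (t ^ (d - 1) * exp (- t) / fact (d - 1)))"
    unfolding b by (rule sum_distrib_right)
  also have "\<dots> = (\<Sum>j\<le>d-1. coef d (ln N) j * K j (real d) t)"
  proof (intro sum.cong refl)
    fix j assume j: "j \<in> {..d-1}"
    have bf: "real (d - 1 choose j) = fact (d - 1) / (fact j * fact (d - 1 - j))"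
      using j by (simp add: binomial_fact)
    have m: "(- ln t) ^ j = (-1) ^ j * ln t ^ j" by (rule power_minus)
    have K: "K j (real d) t = ln t ^ j * t ^ (d - 1) * exp (- t)"
      using True by (simp add: K_def pw indicator_def)
    show "(real (d - 1 choose j) * (- ln t) ^ j * ln N ^ (d - 1 - j)) * (t ^ (d - 1) * exp (- t) / fact (d - 1))
        = coef d (ln N) j * K j (real d) t"
      unfolding bf m K coef_def by (simp add: field_simps)
  qed
  finally show ?thesis using True by (simp add: indicator_def)
qed

lemma full_integral:
  assumes d: "d \<ge> 1"
  shows "integrable lborel (\<lambda>t. indicator {0<..} t * Phi d N t)"
    and "integral\<^sup>L lborel (\<lambda>t. indicator {0<..} t * Phi d N t) = (\<Sum>j\<le>d-1. coef d (ln N) j * G j (real d))"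
proof -
  have eq: "(\<lambda>t. indicator {0<..} t * Phi d N t) = (\<lambda>t. \<Sum>j\<le>d-1. coef d (ln N) j * K j (real d) t)"
    using Phi_expand[OF d] by (intro ext) auto
  have dpos: "real d > 0" using d by simp
  show "integrable lborel (\<lambda>t. indicator {0<..} t * Phi d N t)" unfolding eq
    by (intro Bochner_Integration.integrable_sum Bochner_Integration.integrable_mult_right integrable_K dpos)
  show "integral\<^sup>L lborel (\<lambda>t. indicator {0<..} t * Phi d N t) = (\<Sum>j\<le>d-1. coef d (ln N) j * G j (real d))"
    unfolding eq G_def
    by (subst Bochner_Integration.integral_sum) (auto intro!: Bochner_Integration.integrable_mult_right integrable_K dpos)
qed


lemma tail_pointwise:
  assumes N: "N \<ge> 1" and t: "t > N"
  shows "\<bar>Phi d N t\<bar> \<le> exp (- N) / fact (d - 1) * ((1 + (t - N)) ^ (2 * (d - 1)) * exp (- (t - N)))"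
proof -
  have Npos: "N > 0" using N by simp
  have tpos: "t > 0" using N t by simp
  have l: "ln t - ln N \<le> (t - N) / N"
  proof -
    have "ln (t / N) \<le> t / N - 1" using tpos Npos by (intro ln_le_minus_one) simp
    moreover have "ln (t / N) = ln t - ln N" using tpos Npos by (simp add: ln_div)
    moreover have "t / N - 1 = (t - N) / N" using Npos by (simp add: field_simps)
    ultimately show ?thesis by simp
  qed
  have l0: "ln t - ln N \<ge> 0" using t Npos by simp
  have q: "t / N \<le> 1 + (t - N)"
  proof -
    have "1 * (t - N) \<le> N * (t - N)" using N t by (intro mult_right_mono) auto
    hence "t \<le> N * (1 + (t - N))" by (simp add: algebra_simps)
    thus ?thesis using Npos by (simp add: divide_le_eq mult.commute)
  qed
  have "t * (ln t - ln N) \<le> t * ((t - N) / N)" using l tpos by (intro mult_left_mono) auto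
  also have "\<dots> = (t / N) * (t - N)" by simp
  also have "\<dots> \<le> (1 + (t - N)) * (t - N)" using q t by (intro mult_right_mono) auto
  also have "\<dots> \<le> (1 + (t - N)) * (1 + (t - N))" using t by (intro mult_left_mono) auto
  finally have key: "t * (ln t - ln N) \<le> (1 + (t - N)) ^ 2" by (simp add: power2_eq_square)
  have k0: "0 \<le> t * (ln t - ln N)" using tpos l0 by simp
  have "\<bar>Phi d N t\<bar> = (t * (ln t - ln N)) ^ (d - 1) * exp (- t) / fact (d - 1)"
  proof -
    have "\<bar>(ln N - ln t) ^ (d - 1)\<bar> = (ln t - ln N) ^ (d - 1)"
      using l0 by (simp add: power_abs)
    thus ?thesis unfolding Phi_def using tpos
      by (simp add: abs_mult abs_divide power_mult_distrib mult_ac)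
  qed
  also have "\<dots> \<le> ((1 + (t - N)) ^ 2) ^ (d - 1) * exp (- t) / fact (d - 1)"
    using key k0 by (intro divide_right_mono mult_right_mono power_mono) auto
  also have "\<dots> = exp (- N) / fact (d - 1) * ((1 + (t - N)) ^ (2 * (d - 1)) * exp (- (t - N)))"
  proof -
    have "exp (- t) = exp (- N) * exp (- (t - N))" by (simp add: exp_add[symmetric])
    thus ?thesis by (simp add: power_mult field_simps)
  qed
  finally show ?thesis .
qed

lemma tail_bound:
  assumes d: "d \<ge> 1" and N: "N \<ge> 1"
  shows "integrable lborel (\<lambda>t. indicator {N<..} t * Phi d N t)"
    and "\<bar>integral\<^sup>L lborel (\<lambda>t. indicator {N<..} t * Phi d N t)\<bar>
           \<le> exp (- N) / fact (d - 1) * integral\<^sup>L lborel (\<lambda>s. indicator {0<..} s * ((1 + s) ^ (2 * (d - 1)) * exp (- s)))"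
proof -
  define m where "m = 2 * (d - 1)"
  define h where "h = (\<lambda>s::real. indicator {0<..} s * ((1 + s) ^ m * exp (- s)))"
  define I where "I = integral\<^sup>L lborel h"
  define c where "c = exp (- N) / fact (d - 1)"
  have c0: "c \<ge> 0" unfolding c_def by simp
  have I0: "I \<ge> 0" unfolding I_def h_def by (intro integral_nonneg_AE AE_I2) (simp add: indicator_def)
  have hint: "integrable lborel h" unfolding h_def by (rule integrable_poly_exp)
  have h0: "h s \<ge> 0" for s unfolding h_def by (simp add: indicator_def)
  have h_meas [measurable]: "h \<in> borel_measurable borel" unfolding h_def by measurable
  have full: "integrable lborel (\<lambda>t. indicator {0<..} t * Phi d N t)" using d by (rule full_integral)
  show int: "integrable lborel (\<lambda>t. indicator {N<..} t * Phi d N t)"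
    apply (rule Bochner_Integration.integrable_bound[OF full])
     apply measurable
    apply (rule AE_I2)
    using N apply (auto simp: indicator_def)
    done
  have pw: "ennreal (norm (indicator {N<..} t * Phi d N t)) \<le> ennreal (c * h (t - N))" for t
  proof (cases "t > N")
    case True
    hence "norm (indicator {N<..} t * Phi d N t) = \<bar>Phi d N t\<bar>" by (simp add: indicator_def)
    also have "\<dots> \<le> c * h (t - N)"
      using tail_pointwise[OF N True, of d] True unfolding c_def h_def m_def by (simp add: indicator_def)
    finally show ?thesis by (rule ennreal_leI)
  qed (simp add: indicator_def)
  have "ennreal (norm (integral\<^sup>L lborel (\<lambda>t. indicator {N<..} t * Phi d N t)))
      \<le> (\<integral>\<^sup>+ t. ennreal (norm (indicator {N<..} t * Phi d N t)) \<partial>lborel)"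
    using int by (rule integral_norm_bound_ennreal)
  also have "\<dots> \<le> (\<integral>\<^sup>+ t. ennreal (c * h (t - N)) \<partial>lborel)"
    by (intro nn_integral_mono pw)
  also have "\<dots> = (\<integral>\<^sup>+ t. ennreal c * ennreal (h (t - N)) \<partial>lborel)"
    using c0 h0 by (intro nn_integral_cong) (simp add: ennreal_mult)
  also have "\<dots> = ennreal c * (\<integral>\<^sup>+ t. ennreal (h (t - N)) \<partial>lborel)"
    by (rule nn_integral_cmult) measurable
  also have "(\<integral>\<^sup>+ t. ennreal (h (t - N)) \<partial>lborel) = ennreal \<bar>1\<bar> * (\<integral>\<^sup>+ x. ennreal (h ((N + 1 * x) - N)) \<partial>lborel)"
  proof (rule nn_integral_real_affine)
    show "(\<lambda>x. ennreal (h (x - N))) \<in> borel_measurable borel" unfolding h_def by measurable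
  qed simp
  also have "\<dots> = (\<integral>\<^sup>+ x. ennreal (h x) \<partial>lborel)" by simp
  also have "\<dots> = ennreal I" unfolding I_def using hint h0
    by (intro nn_integral_eq_integral) auto
  finally have "ennreal (norm (integral\<^sup>L lborel (\<lambda>t. indicator {N<..} t * Phi d N t))) \<le> ennreal (c * I)"
    using c0 I0 by (simp add: ennreal_mult)
  moreover have "I \<ge> 0" using I0 .
  ultimately show "\<bar>integral\<^sup>L lborel (\<lambda>t. indicator {N<..} t * Phi d N t)\<bar>
           \<le> exp (- N) / fact (d - 1) * integral\<^sup>L lborel (\<lambda>s. indicator {0<..} s * ((1 + s) ^ (2 * (d - 1)) * exp (- s)))"
    using c0 unfolding c_def I_def h_def m_def by (simp add: ennreal_le_iff)
qed


theorem lemmaL: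
  fixes dt :: "'d::finite itself"
  defines "d \<equiv> CARD('d)"
  shows "(\<lambda>n::nat. Ihat dt n -
            ln (real n) ^ (d - 1) *
            (\<Sum>j=0..d-1. (-1) ^ j * (deriv ^^ j) Gamma (real d) / (fact j * fact (d - 1 - j))
                          / ln (real n) ^ j))
         \<in> O(\<lambda>n. (real n * ln (real n)) ^ (d - 1) * exp (- real n))"
proof -
  define C :: real where "C = integral\<^sup>L lborel (\<lambda>s::real. indicator {0<..} s * ((1 + s) ^ (2 * (d - 1)) * exp (- s))) / fact (d - 1)"
  have d1: "d \<ge> 1" unfolding d_def by (simp add: Suc_le_eq)
  have dpos: "real d > 0" using d1 by simp
  show ?thesis
  proof (rule bigoI)
    show "\<forall>\<^sub>F n in at_top. norm (Ihat dt n -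
            ln (real n) ^ (d - 1) *
            (\<Sum>j=0..d-1. (-1) ^ j * (deriv ^^ j) Gamma (real d) / (fact j * fact (d - 1 - j))
                          / ln (real n) ^ j))
          \<le> C * norm ((real n * ln (real n)) ^ (d - 1) * exp (- real n))"
      using eventually_ge_at_top[of "3::nat"]
    proof eventually_elim
      fix n :: nat assume n3: "n \<ge> 3"
      define N where "N = real n"
      have N: "N \<ge> 3" using n3 unfolding N_def by simp
      have L: "ln N \<ge> 2 / 3"
      proof -
        have "ln (1 / N) \<le> 1 / N - 1" using N by (intro ln_le_minus_one) simp
        hence "- ln N \<le> 1 / N - 1" using N by (simp add: ln_div)
        moreover have "1 / N \<le> 1 / 3" using N by (intro divide_left_mono) auto
        ultimately show ?thesis by simp
      qed
      have Lne: "ln N \<noteq> 0" using L by auto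
      have NL: "N * ln N \<ge> 1"
      proof -
        have "3 * (2 / 3) \<le> N * ln N" using N L by (intro mult_mono) auto
        thus ?thesis by simp
      qed
      have main: "ln N ^ (d - 1) * (\<Sum>j=0..d-1. (-1) ^ j * (deriv ^^ j) Gamma (real d) / (fact j * fact (d - 1 - j)) / ln N ^ j)
          = (\<Sum>j\<le>d-1. coef d (ln N) j * G j (real d))"
        unfolding sum_distrib_left atLeast0AtMost
      proof (intro sum.cong refl)
        fix j assume j: "j \<in> {..d-1}"
        have pd: "ln N ^ (d - 1 - j) = ln N ^ (d - 1) / ln N ^ j" using j Lne by (intro power_diff) auto
        show "ln N ^ (d - 1) * ((-1) ^ j * (deriv ^^ j) Gamma (real d) / (fact j * fact (d - 1 - j)) / ln N ^ j)
            = coef d (ln N) j * G j (real d)"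
          unfolding coef_def pd higher_deriv_Gamma_eq_G[OF dpos] using Lne by (simp add: field_simps)
      qed
      have Ihat: "Ihat dt n = integral\<^sup>L lborel (\<lambda>t. indicator {0<..N} t * Phi d N t)"
        using Ihat_eq(2)[of n dt] n3 unfolding d_def N_def by simp
      have int1: "integrable lborel (\<lambda>t. indicator {0<..N} t * Phi d N t)"
        using Ihat_eq(1)[of n] n3 unfolding d_def N_def by simp
      have int2: "integrable lborel (\<lambda>t. indicator {N<..} t * Phi d N t)"
        using d1 N by (intro tail_bound(1)) auto
      have "integral\<^sup>L lborel (\<lambda>t. indicator {0<..} t * Phi d N t)
          = integral\<^sup>L lborel (\<lambda>t. indicator {0<..N} t * Phi d N t + indicator {N<..} t * Phi d N t)"
        using N by (intro Bochner_Integration.integral_cong refl) (auto simp: indicator_def)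
      also have "\<dots> = integral\<^sup>L lborel (\<lambda>t. indicator {0<..N} t * Phi d N t) + integral\<^sup>L lborel (\<lambda>t. indicator {N<..} t * Phi d N t)"
        using int1 int2 by (rule Bochner_Integration.integral_add)
      finally have split: "integral\<^sup>L lborel (\<lambda>t. indicator {0<..} t * Phi d N t)
          = integral\<^sup>L lborel (\<lambda>t. indicator {0<..N} t * Phi d N t) + integral\<^sup>L lborel (\<lambda>t. indicator {N<..} t * Phi d N t)" .
      have full: "integral\<^sup>L lborel (\<lambda>t. indicator {0<..} t * Phi d N t) = (\<Sum>j\<le>d-1. coef d (ln N) j * G j (real d))"
        using d1 by (rule full_integral(2))
      have diff: "Ihat dt n - ln N ^ (d - 1) * (\<Sum>j=0..d-1. (-1) ^ j * (deriv ^^ j) Gamma (real d) / (fact j * fact (d - 1 - j)) / ln N ^ j)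
          = - integral\<^sup>L lborel (\<lambda>t. indicator {N<..} t * Phi d N t)"
        unfolding main Ihat using split full by simp
      have tb: "\<bar>integral\<^sup>L lborel (\<lambda>t. indicator {N<..} t * Phi d N t)\<bar> \<le> exp (- N) * C"
        using tail_bound(2)[of d N] d1 N unfolding C_def by simp
      have C0: "C \<ge> 0" unfolding C_def
        by (intro divide_nonneg_pos integral_nonneg_AE AE_I2) (auto simp: indicator_def)
      have "exp (- N) \<le> \<bar>(N * ln N) ^ (d - 1) * exp (- N)\<bar>"
      proof -
        have "1 \<le> (N * ln N) ^ (d - 1)" using NL by (rule one_le_power)
        hence "1 * exp (- N) \<le> (N * ln N) ^ (d - 1) * exp (- N)" by (intro mult_right_mono) auto
        thus ?thesis by simp
      qed
      hence "exp (- N) * C \<le> C * \<bar>(N * ln N) ^ (d - 1) * exp (- N)\<bar>"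
        using C0 by (simp add: mult.commute mult_left_mono)
      with tb diff show "norm (Ihat dt n -
            ln (real n) ^ (d - 1) *
            (\<Sum>j=0..d-1. (-1) ^ j * (deriv ^^ j) Gamma (real d) / (fact j * fact (d - 1 - j))
                          / ln (real n) ^ j))
          \<le> C * norm ((real n * ln (real n)) ^ (d - 1) * exp (- real n))"
        unfolding N_def by simp
    qed
  qed
qed


end
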